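(* Let $M$ be a compact manifold without boundary, $\mathrm{d}$ a metric on $M$ defining its topology, and $f$ a bi-Lipschitz homeomorphism of $(M,\mathrm{d})$ such that $\mathrm{d}$ is $f$-hyperbolic. If $f$ is persistent or has the weak shadowing property, then $f$ is Lipschitz structurally stable: for every $\epsilon>0$ there is $\delta>0$ such that for every bi-Lipschitz homeomorphism $g$ of $(M,\mathrm{d})$ with $\mathrm{d}_L(f,g)<\delta$ there is a homeomorphism $h\colon M\to M$ with $f\circ h=h\circ g$ and $\mathrm{d}_{C^0}(h,\mathrm{id})<\epsilon$.
   Context: A metric $\mathrm{d}$ defining the topology is $f$-hyperbolic if there are $\delta_0>0$, $\lambda>1$ such that $\mathrm{d}(x,y)<\delta_0$ implies $\max\{\mathrm{d}(f(x),f(y)),\mathrm{d}(f^{-1}(x),f^{-1}(y))\}\ge\lambda\,\mathrm{d}(x,y)$. $\mathrm{d}_{C^0}(f,g)=\max_{x}\mathrm{d}(f(x),g(x))+\max_x\mathrm{d}(f^{-1}(x),g^{-1}(x))$; $\mathrm{d}'_L(f,g)=\sup_{x\ne y}\left|\log\frac{\mathrm{d}(f(x),f(y))}{\mathrm{d}(g(x),g(y))}\right|$; $\mathrm{d}_L(f,g)=\mathrm{d}_{C^0}(f,g)+\mathrm{d}'_L(f,g)+\mathrm{d}'_L(f^{-1},g^{-1})$. $f$ has the weak shadowing property if for all $\epsilon>0$ there is $\delta>0$ such that whenever $g$ is a homeomorphism with $\mathrm{d}_{C^0}(f,g)<\delta$, for every $x\in M$ there is $y\in M$ with $\mathrm{d}(f^n(y),g^n(x))<\epsilon$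 for all $n\in\mathbb Z$. $f$ is persistent if for all $\epsilon>0$ there is $\delta>0$ such that whenever $g$ is a homeomorphism with $\mathrm{d}_{C^0}(f,g)<\delta$, for every $x\in M$ there is $y\in M$ with $\mathrm{d}(f^n(x),g^n(y))<\epsilon$ for all $n\in\mathbb Z$. *)

theory Defs
  imports "HOL-Analysis.Analysis"
begin

definition closed_manifold :: "'e::euclidean_space itself \<Rightarrow> 'a::metric_space set \<Rightarrow> bool" where
  "closed_manifold E M \<longleftrightarrow> compact M \<and>
     (\<forall>x\<in>M. \<exists>U (V::'e set). openin (top_of_set M) U \<and> x \<in> U \<and> open V \<and> U homeomorphic V)"

definition homeo :: "('a::topological_space \<Rightarrow> 'a) \<Rightarrow> bool" where
  "homeo f \<longleftrightarrow> (\<exists>g. homeomorphism UNIV UNIV f g)"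

definition bilipschitz_homeo :: "('a::metric_space \<Rightarrow> 'a) \<Rightarrow> bool" where
  "bilipschitz_homeo f \<longleftrightarrow> homeo f \<and> (\<exists>C. C-lipschitz_on UNIV f) \<and> (\<exists>C. C-lipschitz_on UNIV (inv f))"

definition zpow :: "('a \<Rightarrow> 'a) \<Rightarrow> int \<Rightarrow> 'a \<Rightarrow> 'a" where
  "zpow f n = (if 0 \<le> n then f ^^ nat n else (inv f) ^^ nat (- n))"

definition f_hyperbolic :: "('a::metric_space \<Rightarrow> 'a) \<Rightarrow> bool" where
  "f_hyperbolic f \<longleftrightarrow> (\<exists>\<delta>0>0. \<exists>lam>1. \<forall>x y. dist x y < \<delta>0 \<longrightarrow>
      max (dist (f x) (f y)) (dist (inv f x) (inv f y)) \<ge> lam * dist x y)"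

definition dC0 :: "('a::metric_space \<Rightarrow> 'a) \<Rightarrow> ('a \<Rightarrow> 'a) \<Rightarrow> real" where
  "dC0 f g = (SUP x. dist (f x) (g x)) + (SUP x. dist (inv f x) (inv g x))"

definition dL' :: "('a::metric_space \<Rightarrow> 'a) \<Rightarrow> ('a \<Rightarrow> 'a) \<Rightarrow> real" where
  "dL' f g = (SUP p\<in>{(x,y). x \<noteq> y}. \<bar>ln (dist (f (fst p)) (f (snd p)) / dist (g (fst p)) (g (snd p)))\<bar>)"

definition dL :: "('a::metric_space \<Rightarrow> 'a) \<Rightarrow> ('a \<Rightarrow> 'a) \<Rightarrow> real" where
  "dL f g = dC0 f g + dL' f g + dL' (inv f) (inv g)"

definition weak_shadowing :: "('a::metric_space \<Rightarrow> 'a) \<Rightarrow> bool" where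
  "weak_shadowing f \<longleftrightarrow> (\<forall>\<epsilon>>0. \<exists>\<delta>>0. \<forall>g. homeo g \<and> dC0 f g < \<delta> \<longrightarrow>
     (\<forall>x. \<exists>y. \<forall>n::int. dist (zpow f n y) (zpow g n x) < \<epsilon>))"

definition persistent :: "('a::metric_space \<Rightarrow> 'a) \<Rightarrow> bool" where
  "persistent f \<longleftrightarrow> (\<forall>\<epsilon>>0. \<exists>\<delta>>0. \<forall>g. homeo g \<and> dC0 f g < \<delta> \<longrightarrow>
     (\<forall>x. \<exists>y. \<forall>n::int. dist (zpow f n x) (zpow g n y) < \<epsilon>))"

definition lipschitz_structurally_stable :: "('a::metric_space \<Rightarrow> 'a) \<Rightarrow> bool" where
  "lipschitz_structurally_stable f \<longleftrightarrow> (\<forall>\<epsilon>>0. \<exists>\<delta>>0. \<forall>g. bilipschitz_homeo g \<and> dL f g < \<delta> \<longrightarrow>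
     (\<exists>h. homeo h \<and> f \<circ> h = h \<circ> g \<and> dC0 h id < \<epsilon>))"

end

theory Submission
  imports Defs "HOL-Homology.Invariance_of_Domain"
begin


lemma homeo_facts:
  assumes "homeo F"
  shows "bij F" "continuous_on UNIV F" "continuous_on UNIV (inv_into UNIV F)" "inv_into UNIV (inv_into UNIV F) = F"
proof -
  obtain G where h: "homeomorphism UNIV UNIV F G" using assms homeo_def by blast
  have a: "\<And>x. G (F x) = x" "\<And>y. F (G y) = y" using h by (auto simp: homeomorphism_def)
  have iG: "inv_into UNIV F = G" by (rule inv_equality) (use a in auto)
  have "inj F" by (metis a(1) injI)
  moreover have "surj F" by (metis a(2) surjI)
  ultimately show "bij F" by (simp add: bij_def)
  show "continuous_on UNIV F" using h by (simp add: homeomorphism_def)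
  show "continuous_on UNIV (inv_into UNIV F)" using h iG by (simp add: homeomorphism_def)
  show "inv_into UNIV (inv_into UNIV F) = F" unfolding iG by (rule inv_equality) (use a in auto)
qed

lemma zpow_succ:
  assumes "bij F" shows "zpow F (n+1) x = F (zpow F n x)"
proof (cases "0 \<le> n")
  case True
  then have "nat (n+1) = Suc (nat n)" by simp
  then show ?thesis using True by (simp add: zpow_def)
next
  case False
  then have "nat (-n) > 0" by simp
  then obtain m where e1: "nat (-n) = Suc m" using gr0_implies_Suc by blast
  hence m: "n = - int (Suc m)" using False by linarith
  have "n + 1 = - int m" using m by simp
  then have "zpow F (n+1) x = (inv_into UNIV F ^^ m) x" by (simp add: zpow_def)
  moreover have "zpow F n x = (inv_into UNIV F ^^ Suc m) x" using False e1 by (simp add: zpow_def)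
  ultimately show ?thesis using assms by (simp add: bij_inv_eq_iff)
qed

lemma zpow_pred:
  assumes "bij F" shows "zpow F (n-1) x = inv_into UNIV F (zpow F n x)"
  using zpow_succ[OF assms, of "n-1" x] assms by (simp add: bij_inv_eq_iff)

lemma zpow_succ':
  assumes "bij F" shows "zpow F (n+1) x = zpow F n (F x)"
proof (cases "0 \<le> n")
  case True
  then have "nat (n+1) = Suc (nat n)" by simp
  then show ?thesis using True by (simp add: zpow_def funpow_Suc_right funpow_swap1)
next
  case False
  then have "nat (-n) > 0" by simp
  then obtain m where e1: "nat (-n) = Suc m" using gr0_implies_Suc by blast
  hence m: "n = - int (Suc m)" using False by linarith
  have "n + 1 = - int m" using m by simp
  then have "zpow F (n+1) x = (inv_into UNIV F ^^ m) x" by (simp add: zpow_def)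
  moreover have "zpow F n (F x) = (inv_into UNIV F ^^ Suc m) (F x)" using False e1 by (simp add: zpow_def)
  ultimately show ?thesis using assms by (simp add: funpow_swap1 bij_is_inj)
qed

lemma cont_funpow: "continuous_on UNIV (f::'a::topological_space \<Rightarrow> 'a) \<Longrightarrow> continuous_on UNIV (f ^^ n)"
proof (induction n)
  case 0 have "f ^^ 0 = id" by simp then show ?case by (simp add: continuous_on_id')
next
  case (Suc n)
  have "(f ^^ Suc n) = f \<circ> (f ^^ n)" by simp
  then show ?case using continuous_on_compose[OF Suc(1)[OF Suc(2)] continuous_on_subset[OF Suc(2)]] by simp
qed

lemma zpow_cont:
  assumes "continuous_on UNIV F" "continuous_on UNIV (inv_into UNIV F)"
  shows "continuous_on UNIV (zpow F n)"
  using assms cont_funpow by (cases "0 \<le> n") (simp_all add: zpow_def)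

lemma seq_grow:
  fixes a :: "int \<Rightarrow> real"
  assumes nn: "\<And>k. a k \<ge> 0" and bd: "\<And>k. a k < B" and mu: "\<mu> > 1"
    and step: "\<And>k. max (a (k+1)) (a (k-1)) \<ge> \<mu> * a k"
    and start: "a 1 \<ge> \<mu> * a 0"
  shows "a 0 = 0"
proof (rule ccontr)
  assume "a 0 \<noteq> 0"
  hence p: "a 0 > 0" using nn[of 0] by linarith
  have ind: "a (int n + 1) \<ge> \<mu> * a (int n) \<and> a (int n) \<ge> \<mu> ^ n * a 0" for n
  proof (induction n)
    case 0 then show ?case using start by simp
  next
    case (Suc n)
    have "\<mu> ^ n * a 0 > 0" using p mu by simp
    hence pos: "a (int n) > 0" using Suc by linarith
    have "1 * a (int n) < \<mu> * a (int n)" using mult_strict_right_mono[OF mu pos] .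
    hence lt: "a (int n + 1) > a (int n)" using Suc by linarith
    hence pos2: "a (int n + 1) > 0" using pos by linarith
    have "1 * a (int n + 1) < \<mu> * a (int n + 1)" using mult_strict_right_mono[OF mu pos2] .
    hence "\<mu> * a (int n + 1) > a (int n)" using lt by linarith
    moreover have "max (a (int n + 1 + 1)) (a (int n + 1 - 1)) \<ge> \<mu> * a (int n + 1)" by (rule step)
    ultimately have "a (int n + 1 + 1) \<ge> \<mu> * a (int n + 1)" by (simp add: max_def split: if_splits)
    moreover have "\<mu> * (\<mu> ^ n * a 0) \<le> \<mu> * a (int n)"
      using Suc mu by (intro mult_left_mono) auto
    hence "a (int n + 1) \<ge> \<mu> ^ Suc n * a 0" using Suc by (simp add: mult.assoc)
    ultimately show ?case by (simp add: add.commute)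
  qed
  obtain n where n: "\<mu> ^ n > B / a 0" using real_arch_pow mu by blast
  hence "B < \<mu> ^ n * a 0" using p by (simp add: pos_divide_less_eq)
  moreover have "\<mu> ^ n * a 0 \<le> a (int n)" using ind by blast
  moreover have "a (int n) < B" by (rule bd)
  ultimately show False by linarith
qed

lemma seq_zero:
  fixes a :: "int \<Rightarrow> real"
  assumes nn: "\<And>k. a k \<ge> 0" and bd: "\<And>k. a k < B" and mu: "\<mu> > 1"
    and step: "\<And>k. max (a (k+1)) (a (k-1)) \<ge> \<mu> * a k"
  shows "a 0 = 0"
proof (cases "a 1 \<ge> \<mu> * a 0")
  case True then show ?thesis using seq_grow[OF nn bd mu step] by blast
next
  case False
  hence "a (-1) \<ge> \<mu> * a 0" using step[of 0] by (simp add: max_def split: if_splits)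
  moreover have "max ((\<lambda>k. a (-k)) (k+1)) ((\<lambda>k. a (-k)) (k-1)) \<ge> \<mu> * (\<lambda>k. a (-k)) k" for k
  proof -
    have e: "(- k) - 1 = -(k+1)" "(-k)+1 = -(k-1)" by simp_all
    show ?thesis using step[of "-k"] by (simp only: e max.commute)
  qed
  ultimately have "(\<lambda>k. a (-k)) 0 = 0" using seq_grow[of "\<lambda>k. a (-k)" B \<mu>] nn bd mu by simp
  then show ?thesis by simp
qed

lemma expansive:
  fixes F :: "'a::metric_space \<Rightarrow> 'a"
  assumes "bij F" "lam > 1"
    and hyp: "\<And>x y. dist x y < d0 \<Longrightarrow> max (dist (F x) (F y)) (dist (inv_into UNIV F x) (inv_into UNIV F y)) \<ge> lam * dist x y"
    and close: "\<And>n. dist (zpow F n x) (zpow F n y) < d0"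
  shows "x = y"
proof -
  define a where "a k = dist (zpow F k x) (zpow F k y)" for k
  have "a 0 = 0"
  proof (rule seq_zero[of a d0 lam])
    fix k
    show "max (a (k+1)) (a (k-1)) \<ge> lam * a k"
      using hyp[OF close[of k]] unfolding a_def zpow_succ[OF assms(1)] zpow_pred[OF assms(1)] .
  qed (use close assms in \<open>auto simp: a_def\<close>)
  then show ?thesis by (simp add: a_def zpow_def)
qed



lemma homeo_inv:
  assumes "homeo F" shows "homeo (inv_into UNIV F)"
proof -
  obtain G where h: "homeomorphism UNIV UNIV F G" using assms homeo_def by blast
  have a: "\<And>x. G (F x) = x" "\<And>y. F (G y) = y" using h by (auto simp: homeomorphism_def)
  have iG: "inv_into UNIV F = G" by (rule inv_equality) (use a in auto)
  show ?thesis unfolding homeo_def iG using homeomorphism_symD[OF h] by blast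
qed

lemma bilip_inv:
  assumes "bilipschitz_homeo f" shows "bilipschitz_homeo (inv_into UNIV f)"
  using assms homeo_inv homeo_facts(4) unfolding bilipschitz_homeo_def by metis

lemma bilip_consts:
  assumes "bilipschitz_homeo f"
  obtains L L' where "L > 0" "L' > 0" "\<And>x y. dist (f x) (f y) \<le> L * dist x y"
    "\<And>x y. dist x y \<le> L' * dist (f x) (f y)"
proof -
  obtain C C' where C: "C-lipschitz_on UNIV f" and C': "C'-lipschitz_on UNIV (inv_into UNIV f)" and h: "homeo f"
    using assms unfolding bilipschitz_homeo_def by blast
  have b: "bij f" using homeo_facts[OF h] by blast
  have 1: "dist (f x) (f y) \<le> (C+1) * dist x y" for x y
  proof -
    have "dist (f x) (f y) \<le> C * dist x y" using C by (simp add: lipschitz_on_def)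
    also have "\<dots> \<le> (C+1) * dist x y" by (simp add: distrib_right)
    finally show ?thesis .
  qed
  have 2: "dist x y \<le> (C'+1) * dist (f x) (f y)" for x y
  proof -
    have "dist x y = dist (inv_into UNIV f (f x)) (inv_into UNIV f (f y))" using b by (simp add: bij_is_inj)
    also have "\<dots> \<le> C' * dist (f x) (f y)" using C' by (simp add: lipschitz_on_def)
    also have "\<dots> \<le> (C'+1) * dist (f x) (f y)" by (simp add: distrib_right)
    finally show ?thesis .
  qed
  have "C \<ge> 0" "C' \<ge> 0" using C C' by (auto simp: lipschitz_on_def)
  then show ?thesis using that[of "C+1" "C'+1"] 1 2 by auto
qed

lemma ratio_bounds:
  fixes f g :: "'a::metric_space \<Rightarrow> 'a"
  assumes "bilipschitz_homeo f" "bilipschitz_homeo g"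
  shows "\<exists>K. \<forall>x y. x \<noteq> y \<longrightarrow> \<bar>ln (dist (f x) (f y) / dist (g x) (g y))\<bar> \<le> K"
proof -
  obtain Lf Lf' where f: "Lf > 0" "Lf' > 0" "\<And>x y. dist (f x) (f y) \<le> Lf * dist x y"
    "\<And>x y. dist x y \<le> Lf' * dist (f x) (f y)" using bilip_consts[OF assms(1)] by blast
  obtain Lg Lg' where g: "Lg > 0" "Lg' > 0" "\<And>x y. dist (g x) (g y) \<le> Lg * dist x y"
    "\<And>x y. dist x y \<le> Lg' * dist (g x) (g y)" using bilip_consts[OF assms(2)] by blast
  have "\<bar>ln (dist (f x) (f y) / dist (g x) (g y))\<bar> \<le> \<bar>ln (Lf * Lg')\<bar> + \<bar>ln (Lf' * Lg)\<bar>" if "x \<noteq> y" for x y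
  proof -
    define d where "d = dist x y"
    have d: "d > 0" using that by (simp add: d_def)
    have fp: "dist (f x) (f y) > 0"
      using f(4)[of x y] d f(2) unfolding d_def by (smt (verit) mult_nonneg_nonpos zero_le_dist)
    have gp: "dist (g x) (g y) > 0"
      using g(4)[of x y] d g(2) unfolding d_def by (smt (verit) mult_nonneg_nonpos zero_le_dist)
    define r where "r = dist (f x) (f y) / dist (g x) (g y)"
    have rp: "r > 0" using fp gp by (simp add: r_def)
    have "dist (f x) (f y) \<le> Lf * d" using f(3) by (simp add: d_def)
    also have "\<dots> \<le> Lf * (Lg' * dist (g x) (g y))" using g(4)[of x y] f(1) by (simp add: d_def)
    finally have "r \<le> Lf * Lg'" using gp by (simp add: r_def divide_le_eq mult.assoc)
    hence up: "ln r \<le> ln (Lf * Lg')" using rp f(1) g(2) by simp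
    have "d \<le> Lf' * dist (f x) (f y)" using f(4) by (simp add: d_def)
    moreover have "dist (g x) (g y) \<le> Lg * d" using g(3) by (simp add: d_def)
    ultimately have "dist (g x) (g y) \<le> Lg * (Lf' * dist (f x) (f y))" using g(1)
      by (smt (verit) mult_left_mono)
    hence "1 / (Lf' * Lg) \<le> r" using fp gp f(2) g(1)
      by (simp add: r_def field_simps)
    hence "ln (1 / (Lf' * Lg)) \<le> ln r" using rp f(2) g(1) by (subst ln_le_cancel_iff) auto
    hence lo: "- ln (Lf' * Lg) \<le> ln r" using f(2) g(1) by (simp add: ln_div)
    show ?thesis using up lo unfolding r_def by linarith
  qed
  then show ?thesis by blast
qed

lemma dL'_bound:
  assumes "bilipschitz_homeo f" "bilipschitz_homeo g" "x \<noteq> y"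
  shows "\<bar>ln (dist (f x) (f y) / dist (g x) (g y))\<bar> \<le> dL' f g"
proof -
  obtain K where K: "\<And>x y. x \<noteq> y \<Longrightarrow> \<bar>ln (dist (f x) (f y) / dist (g x) (g y))\<bar> \<le> K"
    using ratio_bounds[OF assms(1,2)] by blast
  let ?h = "\<lambda>p. \<bar>ln (dist (f (fst p)) (f (snd p)) / dist (g (fst p)) (g (snd p)))\<bar>"
  have "bdd_above (?h ` {(x,y). x \<noteq> y})" by (rule bdd_aboveI2[of _ _ K]) (auto intro: K)
  moreover have "(x,y) \<in> {(x,y). x \<noteq> y}" using assms(3) by simp
  ultimately have "?h (x,y) \<le> (SUP p\<in>{(x,y). x \<noteq> y}. ?h p)" by (rule cSUP_upper[rotated])
  then show ?thesis by (simp add: dL'_def)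
qed

lemma dist_le_exp:
  assumes "bilipschitz_homeo f" "bilipschitz_homeo g" "dL' f g \<le> D"
  shows "dist (f x) (f y) \<le> exp D * dist (g x) (g y)"
proof (cases "x = y")
  case True then show ?thesis by simp
next
  case False
  obtain Lg Lg' where g: "Lg > 0" "Lg' > 0" "\<And>x y. dist (g x) (g y) \<le> Lg * dist x y" "\<And>x y. dist x y \<le> Lg' * dist (g x) (g y)"
    using bilip_consts[OF assms(2)] by blast
  have gp: "dist (g x) (g y) > 0"
    using g(4)[of x y] g(2) False by (smt (verit) mult_nonneg_nonpos zero_le_dist zero_less_dist_iff)
  obtain Lf Lf' where f: "Lf > 0" "Lf' > 0" "\<And>x y. dist (f x) (f y) \<le> Lf * dist x y" "\<And>x y. dist x y \<le> Lf' * dist (f x) (f y)"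
    using bilip_consts[OF assms(1)] by blast
  have fp: "dist (f x) (f y) > 0"
    using f(4)[of x y] f(2) False by (smt (verit) mult_nonneg_nonpos zero_le_dist zero_less_dist_iff)
  define r where "r = dist (f x) (f y) / dist (g x) (g y)"
  have rp: "r > 0" using fp gp by (simp add: r_def)
  have "ln r \<le> D" using dL'_bound[OF assms(1,2) False] assms(3) unfolding r_def by linarith
  hence "r \<le> exp D" using rp by (metis exp_le_cancel_iff exp_ln)
  then show ?thesis using gp by (simp add: r_def divide_le_eq)
qed

lemma dL'_nonneg:
  fixes f g :: "'a::metric_space \<Rightarrow> 'a"
  assumes "bilipschitz_homeo f" "bilipschitz_homeo g" "x \<noteq> (y::'a::metric_space)"
  shows "dL' f g \<ge> 0"
  using dL'_bound[OF assms] by linarith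

lemma bounded_dist:
  assumes "compact (UNIV :: 'a::metric_space set)"
  shows "\<exists>B. \<forall>x y::'a. dist x y \<le> B"
proof -
  obtain a :: 'a where True by blast
  have "bounded (UNIV :: 'a set)" using assms by (rule compact_imp_bounded)
  then obtain r where r: "\<forall>y\<in>UNIV. dist a y \<le> r" using bounded_any_center[of UNIV a] by blast
  have "dist x y \<le> r + r" for x y :: 'a
    using dist_triangle3[of x y a] r by (smt (verit) UNIV_I)
  then show ?thesis by blast
qed

lemma dC0_nonneg:
  assumes "compact (UNIV :: 'a::metric_space set)"
  shows "dC0 f (g :: 'a \<Rightarrow> 'a) \<ge> 0"
proof -
  obtain B where B: "\<And>x y::'a. dist x y \<le> B" using bounded_dist[OF assms] by blast
  obtain a :: 'a where True by blast
  have b1: "bdd_above (range (\<lambda>x. dist (f x) (g x)))" by (rule bdd_aboveI2[of _ _ B]) (rule B)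
  have b2: "bdd_above (range (\<lambda>x. dist (inv_into UNIV f x) (inv_into UNIV g x)))" by (rule bdd_aboveI2[of _ _ B]) (rule B)
  have "0 \<le> dist (f a) (g a)" by simp
  also have "\<dots> \<le> (SUP x. dist (f x) (g x))" by (rule cSUP_upper[OF UNIV_I b1])
  finally have 1: "0 \<le> (SUP x. dist (f x) (g x))" .
  have "0 \<le> dist (inv_into UNIV f a) (inv_into UNIV g a)" by simp
  also have "\<dots> \<le> (SUP x. dist (inv_into UNIV f x) (inv_into UNIV g x))" by (rule cSUP_upper[OF UNIV_I b2])
  finally have 2: "0 \<le> (SUP x. dist (inv_into UNIV f x) (inv_into UNIV g x))" .
  show ?thesis using 1 2 by (simp add: dC0_def)
qed

lemma dC0_id_le:
  assumes "\<And>x. dist (h x) x \<le> e" "\<And>x. dist (inv_into UNIV h x) x \<le> e" "inv_into UNIV (inv_into UNIV h) = h"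
  shows "dC0 (inv_into UNIV h) id \<le> 2 * e" "dC0 h id \<le> 2 * e"
proof -
  have 1: "(SUP x. dist (h x) (id x)) \<le> e" by (rule cSUP_least) (auto intro: assms(1))
  have 2: "(SUP x. dist (inv_into UNIV h x) (id x)) \<le> e" by (rule cSUP_least) (auto intro: assms(2))
  show "dC0 (inv_into UNIV h) id \<le> 2 * e" using 1 2 assms(3) by (simp add: dC0_def inv_id)
  show "dC0 h id \<le> 2 * e" using 1 2 by (simp add: dC0_def inv_id)
qed



lemma manifold_chart:
  fixes x :: "'a::metric_space"
  assumes "closed_manifold TYPE('e::euclidean_space) (UNIV :: 'a set)"
  obtains U and V :: "'e::euclidean_space set" and \<phi> \<psi> where "open U" "x \<in> U" "open V" "homeomorphism U V \<phi> \<psi>"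
proof -
  have "\<forall>x\<in>UNIV. \<exists>(U::'a set) (V::'e set). openin (top_of_set UNIV) U \<and> x \<in> U \<and> open V \<and> U homeomorphic V"
    using conjunct2[OF assms[unfolded closed_manifold_def]] .
  hence "\<exists>(U::'a set) (V::'e set). openin (top_of_set UNIV) U \<and> x \<in> U \<and> open V \<and> U homeomorphic V"
    using bspec UNIV_I by fast
  then obtain U and V :: "'e set" where "openin (top_of_set UNIV) U \<and> x \<in> U \<and> open V \<and> U homeomorphic V"
    by (elim exE)
  hence U: "openin (top_of_set UNIV) U" "x \<in> U" "open V" "U homeomorphic V" by auto
  from U(4) obtain \<phi> \<psi> where h: "homeomorphism U V \<phi> \<psi>" unfolding homeomorphic_def by auto
  have "open U" using U(1) by (simp add: openin_open_eq)
  show ?thesis by (rule that[OF \<open>open U\<close> U(2) U(3) h])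
qed

lemma manifold_compact:
  assumes "closed_manifold TYPE('e::euclidean_space) (UNIV :: 'a::metric_space set)"
  shows "compact (UNIV :: 'a set)"
  using assms unfolding closed_manifold_def by blast

lemma manifold_conn_nbhd:
  assumes "closed_manifold TYPE('e::euclidean_space) (UNIV :: 'a::metric_space set)"
  shows "\<exists>C. open C \<and> connected C \<and> (x::'a) \<in> C"
proof -
  obtain U and V :: "'e set" and \<phi> \<psi> where U: "open U" "x \<in> U" "open V" and h: "homeomorphism U V \<phi> \<psi>"
    by (rule manifold_chart[OF assms])
  have "\<phi> x \<in> V" using h U by (auto simp: homeomorphism_def)
  then obtain r where r: "r > 0" "ball (\<phi> x) r \<subseteq> V" by (rule openE[OF U(3)])
  have h2: "homeomorphism V U \<psi> \<phi>" using h by (rule homeomorphism_symD)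
  have "openin (top_of_set V) (ball (\<phi> x) r)" using r by (simp add: openin_open_eq U(3)) 
  hence "openin (top_of_set U) (\<psi> ` ball (\<phi> x) r)" using homeomorphism_imp_open_map[OF h2] by blast
  hence o: "open (\<psi> ` ball (\<phi> x) r)" using U(1) openin_open_trans by blast
  have "continuous_on V \<psi>" using h2 by (simp add: homeomorphism_def)
  hence c: "connected (\<psi> ` ball (\<phi> x) r)"
    by (rule connected_continuous_image[OF continuous_on_subset[OF _ r(2)] connected_ball])
  have "\<psi> (\<phi> x) = x" using h U(2) by (simp add: homeomorphism_def)
  hence "x \<in> \<psi> ` ball (\<phi> x) r" using r(1) by (intro rev_image_eqI[of "\<phi> x"]) auto
  then show ?thesis using o c by blast
qed

lemma manifold_open_image:
  fixes k :: "'a::metric_space \<Rightarrow> 'a"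
  assumes M: "closed_manifold TYPE('e::euclidean_space) (UNIV :: 'a set)"
    and ck: "continuous_on UNIV k" and ik: "inj k"
  shows "open (range k)"
proof -
  have "\<exists>T. open T \<and> y \<in> T \<and> T \<subseteq> range k" if "y \<in> range k" for y
  proof -
  from that obtain x where y: "y = k x" by blast
  obtain U1 and V1 :: "'e set" and \<phi>1 \<psi>1 where U1: "open U1" "x \<in> U1" "open V1" and h1: "homeomorphism U1 V1 \<phi>1 \<psi>1"
    by (rule manifold_chart[OF M])
  obtain U2 and V2 :: "'e set" and \<phi>2 \<psi>2 where U2: "open U2" "k x \<in> U2" "open V2" and h2: "homeomorphism U2 V2 \<phi>2 \<psi>2"
    by (rule manifold_chart[OF M])
  define W where "W = U1 \<inter> k -` U2"
  have oW: "open W" unfolding W_def using U1 U2 open_vimage ck by blast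
  have xW: "x \<in> W" using U1 U2 by (simp add: W_def)
  have "openin (top_of_set U1) W" unfolding W_def by (rule openin_open_Int[OF open_vimage[OF U2(1) ck]])
  hence "openin (top_of_set V1) (\<phi>1 ` W)" using homeomorphism_imp_open_map[OF h1] by blast
  hence oW': "open (\<phi>1 ` W)" using U1(3) openin_open_trans by blast
  have inv1: "\<And>w. w \<in> U1 \<Longrightarrow> \<psi>1 (\<phi>1 w) = w" "\<And>v. v \<in> V1 \<Longrightarrow> \<phi>1 (\<psi>1 v) = v"
    "\<phi>1 ` U1 = V1" "\<psi>1 ` V1 = U1" using h1 by (auto simp: homeomorphism_def)
  have inv2: "\<And>w. w \<in> U2 \<Longrightarrow> \<psi>2 (\<phi>2 w) = w" using h2 by (auto simp: homeomorphism_def)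
  have c1: "continuous_on V1 \<psi>1" "continuous_on U2 \<phi>2" using h1 h2 by (auto simp: homeomorphism_def)
  have WU1: "W \<subseteq> U1" by (simp add: W_def)
  have img1: "\<psi>1 ` (\<phi>1 ` W) = W" using inv1(1) WU1 by (force simp: image_iff)
  have kW: "k ` W \<subseteq> U2" by (auto simp: W_def)
  define \<Psi> where "\<Psi> = \<phi>2 \<circ> k \<circ> \<psi>1"
  have cPsi: "continuous_on (\<phi>1 ` W) \<Psi>" unfolding \<Psi>_def
  proof (intro continuous_on_compose)
    show "continuous_on (\<phi>1 ` W) \<psi>1" using c1(1) continuous_on_subset WU1 inv1(3) by blast
    show "continuous_on (\<psi>1 ` \<phi>1 ` W) k" using ck continuous_on_subset by blast
    show "continuous_on (k ` \<psi>1 ` \<phi>1 ` W) \<phi>2" using c1(2) continuous_on_subset kW img1 by metis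
  qed
  have iPsi: "inj_on \<Psi> (\<phi>1 ` W)"
  proof (rule inj_onI)
    fix a b assume a: "a \<in> \<phi>1 ` W" and b: "b \<in> \<phi>1 ` W" and e: "\<Psi> a = \<Psi> b"
    obtain wa where wa: "wa \<in> W" "a = \<phi>1 wa" using a by blast
    obtain wb where wb: "wb \<in> W" "b = \<phi>1 wb" using b by blast
    have "\<psi>1 a = wa" "\<psi>1 b = wb" using wa wb inv1(1) WU1 by auto
    hence "\<phi>2 (k wa) = \<phi>2 (k wb)" using e by (simp add: \<Psi>_def)
    moreover have "k wa \<in> U2" "k wb \<in> U2" using kW wa wb by auto
    ultimately have "k wa = k wb" using inv2 by metis
    hence "wa = wb" using ik by (simp add: inj_eq)
    thus "a = b" using wa wb by simp
  qed
  have oimg: "open (\<Psi> ` (\<phi>1 ` W))" by (rule invariance_of_domain[OF cPsi oW' iPsi])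
  have eqimg: "\<Psi> ` (\<phi>1 ` W) = \<phi>2 ` (k ` W)" by (simp only: \<Psi>_def image_comp[symmetric] img1)
  have "k ` W = U2 \<inter> \<phi>2 -` (\<Psi> ` (\<phi>1 ` W))"
  proof
    show "k ` W \<subseteq> U2 \<inter> \<phi>2 -` (\<Psi> ` (\<phi>1 ` W))" using kW eqimg by auto
    show "U2 \<inter> \<phi>2 -` (\<Psi> ` (\<phi>1 ` W)) \<subseteq> k ` W"
    proof
      fix z assume z: "z \<in> U2 \<inter> \<phi>2 -` (\<Psi> ` (\<phi>1 ` W))"
      then obtain w where w: "w \<in> W" "\<phi>2 z = \<phi>2 (k w)" using eqimg by auto
      have "k w \<in> U2" using kW w by auto
      moreover have "z \<in> U2" using z by auto
      ultimately have "z = k w" using inv2 w(2) by metis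
      thus "z \<in> k ` W" using w by blast
    qed
  qed
  hence "open (k ` W)" using continuous_open_preimage[OF c1(2) U2(1) oimg] by simp
  moreover have "y \<in> k ` W" using y xW by blast
  moreover have "k ` W \<subseteq> range k" by blast
  ultimately show "\<exists>T. open T \<and> y \<in> T \<and> T \<subseteq> range k" by blast
  qed
  then show ?thesis by (subst open_subopen) blast
qed

lemma manifold_surj:
  fixes dummy :: "'a::metric_space"
  assumes M: "closed_manifold TYPE('e::euclidean_space) (UNIV :: 'a set)"
  shows "\<exists>\<eta>>0. \<forall>k::'a\<Rightarrow>'a. continuous_on UNIV k \<and> inj k \<and> (\<forall>x. dist (k x) x < \<eta>) \<longrightarrow> surj k"
proof -
  have cpt: "compact (UNIV :: 'a set)" by (rule manifold_compact[OF M])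
  have cov: "UNIV \<subseteq> \<Union>{C::'a set. open C \<and> connected C}"
  proof
    fix x :: 'a
    obtain C where "open C \<and> connected C \<and> x \<in> C" using manifold_conn_nbhd[OF M, of x] by (elim exE)
    then show "x \<in> \<Union>{C::'a set. open C \<and> connected C}" by blast
  qed
  obtain \<eta> where eta: "\<eta> > 0" "\<And>x::'a. x \<in> UNIV \<Longrightarrow> \<exists>G \<in> {C. open C \<and> connected C}. ball x \<eta> \<subseteq> G"
    by (rule Heine_Borel_lemma[OF cpt cov]) auto
  have "surj k" if ck: "continuous_on UNIV k" and ik: "inj k" and dk: "\<forall>x. dist (k x) x < \<eta>" for k :: "'a \<Rightarrow> 'a"
  proof -
    let ?S = "range k"
    have oS: "open ?S" by (rule manifold_open_image[OF M ck ik])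
    have cS: "closed ?S" using compact_continuous_image[OF ck cpt] compact_imp_closed by blast
    have "y \<in> ?S" for y
    proof -
      obtain C where C: "open C" "connected C" "ball y \<eta> \<subseteq> C" using eta(2)[of y] by auto
      have yC: "y \<in> C" "k y \<in> C" using C(3) eta(1) dk by (auto simp: dist_commute)
      have "openin (top_of_set C) (C \<inter> ?S)" using oS by (simp add: openin_open_Int)
      moreover have "closedin (top_of_set C) (C \<inter> ?S)" using cS by (simp add: closedin_closed_Int)
      ultimately have "C \<inter> ?S = {} \<or> C \<inter> ?S = C" using C(2) connected_clopen by blast
      moreover have "k y \<in> C \<inter> ?S" using yC by blast
      ultimately show ?thesis using yC by blast
    qed
    then show ?thesis by blast
  qed
  then show ?thesis using eta(1) by blast
qed



lemma zpow_0: "zpow F 0 x = x" by (simp add: zpow_def)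

lemma core_conj:
  fixes F G :: "'a::metric_space \<Rightarrow> 'a"
  assumes hF: "homeo F" and hG: "homeo G" and cpt: "compact (UNIV :: 'a set)"
    and expF: "\<And>x y. (\<forall>n. dist (zpow F n x) (zpow F n y) \<le> 2*eps) \<Longrightarrow> x = y"
    and expG: "\<And>x y. (\<forall>n. dist (zpow G n x) (zpow G n y) \<le> 2*eps) \<Longrightarrow> x = y"
    and tot: "\<And>x. \<exists>y. \<forall>n. dist (zpow F n x) (zpow G n y) \<le> eps"
    and topf: "\<And>k::'a\<Rightarrow>'a. continuous_on UNIV k \<Longrightarrow> inj k \<Longrightarrow> (\<forall>x. dist (k x) x \<le> eps) \<Longrightarrow> surj k"
  shows "\<exists>k. homeo k \<and> G \<circ> k = k \<circ> F \<and> (\<forall>x. dist (k x) x \<le> eps) \<and> (\<forall>x. dist (inv_into UNIV k x) x \<le> eps)"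
proof -
  define R where "R x y \<longleftrightarrow> (\<forall>n. dist (zpow F n x) (zpow G n y) \<le> eps)" for x y
  define k where "k x = (SOME y. R x y)" for x
  have Rk: "R x (k x)" for x
  proof -
    have "\<exists>y. R x y" using tot[of x] by (simp add: R_def)
    then show ?thesis unfolding k_def by (rule someI_ex)
  qed
  have uniq: "y1 = y2" if "R x y1" "R x y2" for x y1 y2
  proof (rule expG, rule allI)
    fix n
    have "dist (zpow G n y1) (zpow G n y2) \<le> dist (zpow F n x) (zpow G n y1) + dist (zpow F n x) (zpow G n y2)"
      by (rule dist_triangle3)
    also have "\<dots> \<le> 2*eps" using that by (auto simp: R_def intro: add_mono[of _ eps _ eps, simplified])
    finally show "dist (zpow G n y1) (zpow G n y2) \<le> 2*eps" .
  qed
  have ik: "inj k"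
  proof (rule injI)
    fix x1 x2 assume eq: "k x1 = k x2"
    show "x1 = x2"
    proof (rule expF, rule allI)
      fix n
      have "dist (zpow F n x1) (zpow F n x2) \<le> dist (zpow F n x1) (zpow G n (k x1)) + dist (zpow F n x2) (zpow G n (k x1))"
        by (metis dist_commute dist_triangle3)
      also have "\<dots> \<le> 2*eps" using Rk[of x1] Rk[of x2] eq by (auto simp: R_def intro: add_mono[of _ eps _ eps, simplified])
      finally show "dist (zpow F n x1) (zpow F n x2) \<le> 2*eps" .
    qed
  qed
  have dk: "dist (k x) x \<le> eps" for x using Rk[of x] unfolding R_def
    by (metis zpow_0 dist_commute)
  have bF: "bij F" and bG: "bij G" using homeo_facts hF hG by auto
  have conj: "G (k x) = k (F x)" for x
  proof (rule uniq[of "F x"])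
    show "R (F x) (k (F x))" by (rule Rk)
    show "R (F x) (G (k x))" unfolding R_def
    proof
      fix n
      have "zpow F n (F x) = zpow F (n+1) x" using zpow_succ'[OF bF] by simp
      moreover have "zpow G n (G (k x)) = zpow G (n+1) (k x)" using zpow_succ'[OF bG] by simp
      ultimately show "dist (zpow F n (F x)) (zpow G n (G (k x))) \<le> eps" using Rk[of x] by (simp add: R_def)
    qed
  qed
  have cF: "continuous_on UNIV (zpow F n)" for n using homeo_facts[OF hF] zpow_cont by blast
  have cG: "continuous_on UNIV (zpow G n)" for n using homeo_facts[OF hG] zpow_cont by blast
  define Gr where "Gr = {p. R (fst p) (snd p)}"
  have "Gr = (\<Inter>n. {p. dist (zpow F n (fst p)) (zpow G n (snd p)) \<le> eps})"
    by (auto simp: Gr_def R_def)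
  moreover have "closed {p::'a\<times>'a. dist (zpow F n (fst p)) (zpow G n (snd p)) \<le> eps}" for n
  proof (rule closed_Collect_le)
    show "continuous_on UNIV (\<lambda>p::'a\<times>'a. dist (zpow F n (fst p)) (zpow G n (snd p)))"
      by (intro continuous_on_dist continuous_on_compose2[OF cF[of n] continuous_on_fst]
          continuous_on_compose2[OF cG[of n] continuous_on_snd] continuous_on_id) auto
  qed (simp add: continuous_on_const)
  ultimately have clGr: "closed Gr" by (simp add: closed_INT)
  have ck: "continuous_on UNIV k"
    unfolding continuous_on_closed_vimage[OF closed_UNIV]
  proof (intro allI impI)
    fix B :: "'a set" assume B: "closed B"
    have eq: "k -` B \<inter> UNIV = fst ` (Gr \<inter> (UNIV \<times> B))"
    proof
      show "k -` B \<inter> UNIV \<subseteq> fst ` (Gr \<inter> (UNIV \<times> B))"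
      proof
        fix x assume "x \<in> k -` B \<inter> UNIV"
        hence "(x, k x) \<in> Gr \<inter> (UNIV \<times> B)" using Rk[of x] by (auto simp: Gr_def)
        thus "x \<in> fst ` (Gr \<inter> (UNIV \<times> B))" by (metis fst_conv image_eqI)
      qed
      show "fst ` (Gr \<inter> (UNIV \<times> B)) \<subseteq> k -` B \<inter> UNIV"
      proof
        fix x assume "x \<in> fst ` (Gr \<inter> (UNIV \<times> B))"
        then obtain y where "R x y" "y \<in> B" by (auto simp: Gr_def)
        hence "k x = y" using uniq Rk by blast
        thus "x \<in> k -` B \<inter> UNIV" using \<open>y \<in> B\<close> by simp
      qed
    qed
    have cUU: "compact ((UNIV :: 'a set) \<times> (UNIV :: 'a set))" by (rule compact_Times[OF cpt cpt])
    have "compact ((Gr \<inter> (UNIV \<times> B)) \<inter> (UNIV \<times> UNIV))"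
      by (rule closed_Int_compact[OF closed_Int[OF clGr closed_Times[OF closed_UNIV B]] cUU])
    hence "compact (Gr \<inter> (UNIV \<times> B))" by simp
    hence "compact (fst ` (Gr \<inter> (UNIV \<times> B)))" by (intro compact_continuous_image continuous_on_fst continuous_on_id)
    thus "closed (k -` B \<inter> UNIV)" unfolding eq by (rule compact_imp_closed)
  qed
  have sk: "surj k" using topf[OF ck ik] dk by blast
  obtain k' where hk: "homeomorphism UNIV UNIV k k'" using homeomorphism_compact[OF cpt ck sk] ik by blast
  have homk: "homeo k" unfolding homeo_def using hk by blast
  have "dist (inv_into UNIV k x) x \<le> eps" for x
  proof -
    have "k (inv_into UNIV k x) = x" using sk by (simp add: surj_f_inv_f)
    then show ?thesis using dk[of "inv_into UNIV k x"] by (simp add: dist_commute)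
  qed
  then show ?thesis using homk conj dk by (intro exI[of _ k]) (auto simp: fun_eq_iff)
qed



lemma hyp_transfer:
  fixes f g :: "'a::metric_space \<Rightarrow> 'a"
  assumes bf: "bilipschitz_homeo f" and bg: "bilipschitz_homeo g"
    and hyp: "\<And>x y. dist x y < d0 \<Longrightarrow> max (dist (f x) (f y)) (dist (inv_into UNIV f x) (inv_into UNIV f y)) \<ge> lam * dist x y"
    and D1: "dL' f g \<le> D" and D2: "dL' (inv_into UNIV f) (inv_into UNIV g) \<le> D"
    and xy: "dist x y < d0"
  shows "max (dist (g x) (g y)) (dist (inv_into UNIV g x) (inv_into UNIV g y)) \<ge> (exp (-D) * lam) * dist x y"
proof -
  have a: "dist (f x) (f y) \<le> exp D * dist (g x) (g y)" by (rule dist_le_exp[OF bf bg D1])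
  have b: "dist (inv_into UNIV f x) (inv_into UNIV f y) \<le> exp D * dist (inv_into UNIV g x) (inv_into UNIV g y)"
    by (rule dist_le_exp[OF bilip_inv[OF bf] bilip_inv[OF bg] D2])
  have "lam * dist x y \<le> exp D * max (dist (g x) (g y)) (dist (inv_into UNIV g x) (inv_into UNIV g y))"
    using hyp[OF xy] a b by (smt (verit) exp_gt_zero max.cobounded1 max.cobounded2 mult_left_mono)
  hence "exp (-D) * (lam * dist x y) \<le> exp (-D) * (exp D * max (dist (g x) (g y)) (dist (inv_into UNIV g x) (inv_into UNIV g y)))"
    by (intro mult_left_mono) auto
  also have "\<dots> = max (dist (g x) (g y)) (dist (inv_into UNIV g x) (inv_into UNIV g y))"
    by (simp add: mult.assoc[symmetric] exp_add[symmetric])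
  finally show ?thesis by (simp add: mult.assoc)
qed

theorem mainTheorem8:
  fixes f :: "'a::metric_space \<Rightarrow> 'a"
  assumes "closed_manifold TYPE('e::euclidean_space) (UNIV :: 'a set)"
    and "bilipschitz_homeo f"
    and "f_hyperbolic f"
    and "persistent f \<or> weak_shadowing f"
  shows "lipschitz_structurally_stable f"
proof (cases "\<exists>a b::'a. a \<noteq> b")
  case False
  hence all: "\<And>a b::'a. a = b" by blast
  have hid: "homeo (id :: 'a \<Rightarrow> 'a)" unfolding homeo_def by (rule exI[of _ id]) (simp add: homeomorphism_def)
  have "dC0 (id::'a\<Rightarrow>'a) id = 0" by (simp add: dC0_def)
  then show ?thesis unfolding lipschitz_structurally_stable_def
    using hid all by (intro allI impI exI[of _ 1]) (auto intro!: exI[of _ id] simp: fun_eq_iff)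
next
  case True
  then obtain a b :: 'a where ab: "a \<noteq> b" by blast
  note M = assms(1)
  have cpt: "compact (UNIV :: 'a set)" by (rule manifold_compact[OF M])
  have bf: "bilipschitz_homeo f" by (rule assms(2))
  have hF: "homeo f" using bf by (simp add: bilipschitz_homeo_def)
  have bijf: "bij f" using homeo_facts[OF hF] by blast
  obtain d0 lam where d0: "d0 > 0" and lam: "lam > 1"
    and hyp: "\<And>x y. dist x y < d0 \<Longrightarrow> max (dist (f x) (f y)) (dist (inv_into UNIV f x) (inv_into UNIV f y)) \<ge> lam * dist x y"
    using assms(3) unfolding f_hyperbolic_def by blast
  obtain \<eta> where eta: "\<eta> > 0" and topf0: "\<And>k::'a\<Rightarrow>'a. continuous_on UNIV k \<Longrightarrow> inj k \<Longrightarrow> (\<forall>x. dist (k x) x < \<eta>) \<Longrightarrow> surj k"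
    using manifold_surj[OF M] by blast
  show ?thesis unfolding lipschitz_structurally_stable_def
  proof (intro allI impI)
    fix \<epsilon> :: real assume \<epsilon>: "\<epsilon> > 0"
    define e where "e = min (\<epsilon>/3) (min (\<eta>/2) (d0/3))"
    have e: "e > 0" "2*e < \<epsilon>" "e < \<eta>" "2*e < d0" using \<epsilon> eta d0 by (auto simp: e_def min_def)
    have topf: "surj k" if "continuous_on UNIV k" "inj k" "\<forall>x. dist (k x) x \<le> e" for k :: "'a\<Rightarrow>'a"
    proof (rule topf0[OF that(1,2)])
      show "\<forall>x. dist (k x) x < \<eta>" using that(3) e(3) by (auto intro: le_less_trans)
    qed
    have expF: "x = y" if "\<forall>n. dist (zpow f n x) (zpow f n y) \<le> 2*e" for x y
    proof (rule expansive[OF bijf lam hyp])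
      show "\<And>n. dist (zpow f n x) (zpow f n y) < d0" using that e(4) by (auto intro: le_less_trans)
    qed
    have lnl: "ln lam > 0" using lam by simp
    have close: "homeo g \<and> dC0 f g \<le> dL f g \<and> (\<forall>x y. x = y \<or> x \<noteq> y) \<and>
        (\<forall>x y. (\<forall>n. dist (zpow g n x) (zpow g n y) \<le> 2*e) \<longrightarrow> x = y)"
      if g: "bilipschitz_homeo g" "dL f g < ln lam / 2" for g
    proof -
      have hG: "homeo g" using g(1) by (simp add: bilipschitz_homeo_def)
      have n1: "dL' f g \<ge> 0" by (rule dL'_nonneg[OF bf g(1) ab])
      have n2: "dL' (inv_into UNIV f) (inv_into UNIV g) \<ge> 0" by (rule dL'_nonneg[OF bilip_inv[OF bf] bilip_inv[OF g(1)] ab])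
      have n3: "dC0 f g \<ge> 0" by (rule dC0_nonneg[OF cpt])
      define D where "D = dL f g"
      have D1: "dL' f g \<le> D" and D2: "dL' (inv_into UNIV f) (inv_into UNIV g) \<le> D" and D3: "dC0 f g \<le> D"
        using n1 n2 n3 by (auto simp: D_def dL_def)
      have Dl: "D < ln lam" using g(2) lnl by (simp add: D_def)
      have mu: "exp (-D) * lam > 1"
      proof -
        have "exp (-D) * lam = exp (ln lam - D)" using lam by (simp add: exp_diff exp_minus divide_inverse mult.commute)
        also have "\<dots> > 1" using Dl by simp
        finally show ?thesis .
      qed
      have bg: "bij g" using homeo_facts[OF hG] by blast
      have expG: "x = y" if "\<forall>n. dist (zpow g n x) (zpow g n y) \<le> 2*e" for x y
      proof (rule expansive[OF bg mu])
        show "\<And>x y. dist x y < d0 \<Longrightarrow> exp (-D) * lam * dist x y \<le> max (dist (g x) (g y)) (dist (inv_into UNIV g x) (inv_into UNIV g y))"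
          by (rule hyp_transfer[OF bf g(1) hyp D1 D2])
        show "\<And>n. dist (zpow g n x) (zpow g n y) < d0" using that e(4) by (auto intro: le_less_trans)
      qed
      show ?thesis using hG D3 expG by (simp add: D_def)
    qed
    show "\<exists>\<delta>>0. \<forall>g. bilipschitz_homeo g \<and> dL f g < \<delta> \<longrightarrow> (\<exists>h. homeo h \<and> f \<circ> h = h \<circ> g \<and> dC0 h id < \<epsilon>)"
      using assms(4)
    proof
      assume "persistent f"
      then obtain \<delta>p where dp: "\<delta>p > 0" and P: "\<And>g. homeo g \<and> dC0 f g < \<delta>p \<Longrightarrow>
          (\<forall>x. \<exists>y. \<forall>n::int. dist (zpow f n x) (zpow g n y) < e)"
        unfolding persistent_def using e(1) by blast
      show ?thesis
      proof (intro exI[of _ "min \<delta>p (ln lam / 2)"] conjI allI impI)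
        show "min \<delta>p (ln lam / 2) > 0" using dp lnl by simp
        fix g assume g: "bilipschitz_homeo g \<and> dL f g < min \<delta>p (ln lam / 2)"
        have cl: "homeo g" "dC0 f g \<le> dL f g" "\<And>x y. (\<forall>n. dist (zpow g n x) (zpow g n y) \<le> 2*e) \<Longrightarrow> x = y"
          using close[of g] g by auto
        have tot: "\<And>x. \<exists>y. \<forall>n. dist (zpow f n x) (zpow g n y) \<le> e"
        proof -
          have "dC0 f g < \<delta>p" using cl(2) g by linarith
          then show "\<And>x. \<exists>y. \<forall>n. dist (zpow f n x) (zpow g n y) \<le> e" using P[of g] cl(1) by (fastforce intro: less_imp_le)
        qed
        obtain k where k: "homeo k" "g \<circ> k = k \<circ> f" "\<forall>x. dist (k x) x \<le> e" "\<forall>x. dist (inv_into UNIV k x) x \<le> e"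
          using core_conj[OF hF cl(1) cpt expF cl(3) tot topf] by blast
        have bk: "bij k" using homeo_facts[OF k(1)] by blast
        have ikk: "inv_into UNIV (inv_into UNIV k) = k" using homeo_facts[OF k(1)] by blast
        have "f (inv_into UNIV k y) = inv_into UNIV k (g y)" for y
        proof -
          define x where "x = inv_into UNIV k y"
          have kx: "k x = y" using bk by (simp add: x_def bij_is_surj surj_f_inv_f)
          have "g (k x) = k (f x)" using k(2) by (simp add: fun_eq_iff)
          hence "inv_into UNIV k (g y) = f x" using kx bk by (simp add: bij_is_inj)
          thus ?thesis by (simp add: x_def)
        qed
        hence "f \<circ> inv_into UNIV k = inv_into UNIV k \<circ> g" by (simp add: fun_eq_iff)
        moreover have "dC0 (inv_into UNIV k) id \<le> 2*e" using dC0_id_le(1)[of k e] k(3,4) ikk by blast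
        ultimately show "\<exists>h. homeo h \<and> f \<circ> h = h \<circ> g \<and> dC0 h id < \<epsilon>"
          using homeo_inv[OF k(1)] e(2) by (intro exI[of _ "inv_into UNIV k"]) auto
      qed
    next
      assume "weak_shadowing f"
      then obtain \<delta>p where dp: "\<delta>p > 0" and P: "\<And>g. homeo g \<and> dC0 f g < \<delta>p \<Longrightarrow>
          (\<forall>x. \<exists>y. \<forall>n::int. dist (zpow f n y) (zpow g n x) < e)"
        unfolding weak_shadowing_def using e(1) by blast
      show ?thesis
      proof (intro exI[of _ "min \<delta>p (ln lam / 2)"] conjI allI impI)
        show "min \<delta>p (ln lam / 2) > 0" using dp lnl by simp
        fix g assume g: "bilipschitz_homeo g \<and> dL f g < min \<delta>p (ln lam / 2)"
        have cl: "homeo g" "dC0 f g \<le> dL f g" "\<And>x y. (\<forall>n. dist (zpow g n x) (zpow g n y) \<le> 2*e) \<Longrightarrow> x = y"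
          using close[of g] g by auto
        have tot0: "\<forall>x. \<exists>y. \<forall>n::int. dist (zpow f n y) (zpow g n x) < e"
        proof -
          have "dC0 f g < \<delta>p" using cl(2) g by linarith
          then show ?thesis using P[of g] cl(1) by blast
        qed
        have tot: "\<And>x. \<exists>y. \<forall>n. dist (zpow g n x) (zpow f n y) \<le> e"
        proof -
          fix x
          obtain y where "\<forall>n::int. dist (zpow f n y) (zpow g n x) < e" using tot0 by blast
          then show "\<exists>y. \<forall>n. dist (zpow g n x) (zpow f n y) \<le> e" by (auto simp: dist_commute intro: less_imp_le)
        qed
        obtain k where k: "homeo k" "f \<circ> k = k \<circ> g" "\<forall>x. dist (k x) x \<le> e" "\<forall>x. dist (inv_into UNIV k x) x \<le> e"
          using core_conj[OF cl(1) hF cpt cl(3) expF tot topf] by blast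
        have ikk: "inv_into UNIV (inv_into UNIV k) = k" using homeo_facts[OF k(1)] by blast
        have "dC0 k id \<le> 2*e" using dC0_id_le(2)[of k e] k(3,4) ikk by blast
        then show "\<exists>h. homeo h \<and> f \<circ> h = h \<circ> g \<and> dC0 h id < \<epsilon>"
          using k(1,2) e(2) by (intro exI[of _ k]) auto
      qed
    qed
  qed
qed


end
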